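(* If $n$ is a non-negative integer and $p$ is a positive integer, then $$\sum_{k = 1}^n \sum_{j = 0}^{k - 1} \frac{1}{(k - j)(n - j + p)} = \frac{1}{2}\left( H_n^2 - H_n^{(2)} \right) - \frac{1}{2}\left( H_{p - 1}^2 + H_{p - 1}^{(2)} \right) + H_{p - 1} \left( H_{p + n - 1} - H_n \right) + H_n \left( H_{p + n} - H_n \right) - \sum_{k = 1}^{p - 1} \frac{H_{k - 1}}{n + k}.$$ In particular, $$\sum_{k = 1}^n \sum_{j = 0}^{k - 1} \frac{1}{(k - j)(n + 1 - j)} = \frac{1}{2}\left( H_n^2 - H_n^{(2)} \right) + \frac{H_n}{n + 1}.$$
   Context: $H_n=\sum_{m=1}^n\frac1m$ and $H_n^{(2)}=\sum_{m=1}^n\frac1{m^2}$ (with $H_0=H_0^{(2)}=0$). Empty sums are zero. *)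

theory Defs
  imports "HOL-Analysis.Analysis"
begin

text \<open>Generalized harmonic number of order 2: H_n^(2) = sum_{m=1}^n 1/m^2 (H_0^(2) = 0).
  The ordinary harmonic number H_n is the library's harm n.\<close>
definition harm2 :: "nat \<Rightarrow> real" where
  "harm2 n = (\<Sum>m=1..n. 1 / (real m)^2)"

end

theory Submission
  imports Defs
begin

lemma harm2_Suc: "harm2 (Suc n) = harm2 n + 1 / (real (Suc n) * real (Suc n))"
  by (simp add: harm2_def power2_eq_square)

lemma G:
  fixes A' :: real
  fixes u w ea eb ec :: real
  assumes IH: "((1/2)*(A'^2 - T') - (1/2)*(B^2+R) + B*(D10 - A') + A'*(D11' - A')) - ((1/2)*(A^2 - T) - (1/2)*(B^2+R) + B*(D - A) + A*(D1 - A)) - (Xb - Xa) = A'/E2"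
  and nz: "u\<noteq>0" "w\<noteq>0" "ea\<noteq>0" "eb\<noteq>0" "ec\<noteq>0"
  and rel: "ea = u+w-1" "eb = u+w" "ec = u+w+1"
  and h: "A' = A + 1/u" "T' = T + 1/(u*u)" "B' = B + 1/w" "R' = R + 1/(w*w)"
    "D1 = D + 1/ea" "D10 = D + 1/ea" "D11' = D+1/ea+1/eb"
    "D01 = D+1/ea" "D02 = D+1/ea+1/eb" "D11 = D+1/ea+1/eb" "D12 = D+1/ea+1/eb+1/ec"
    "E2 = eb" "E3 = ec" "F2 = eb" "F1 = ea"
  shows "((1/2)*(A'^2 - T') - (1/2)*(B'^2+R') + B'*(D11 - A') + A'*(D12 - A')) - ((1/2)*(A^2 - T) - (1/2)*(B'^2+R') + B'*(D01 - A) + A*(D02 - A)) - ((Xb + B/F2) - (Xa + B/F1)) = A'/E3"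
proof -
  from IH have X: "Xb = Xa + (((1/2)*(A'^2 - T') - (1/2)*(B^2+R) + B*(D10 - A') + A'*(D11' - A')) - ((1/2)*(A^2 - T) - (1/2)*(B^2+R) + B*(D - A) + A*(D1 - A))) - A'/E2" by simp
  show ?thesis unfolding X h using nz apply (simp add: field_simps power2_eq_square) unfolding rel by algebra
qed

lemma G0:
  fixes u v :: real
  assumes nz: "u\<noteq>0" "v\<noteq>0" and rel: "v = u + 1"
  and h: "Z = 0" "S1 = 0" "S2 = 0" "A' = A + 1/u" "T' = T + 1/(u*u)" "P2 = A' + 1/v" "P4 = A'" "E = v"
  shows "((1/2)*(A'^2 - T') - (1/2)*(Z^2+Z2) + Z*(P1 - A') + A'*(P2 - A')) - ((1/2)*(A^2 - T) - (1/2)*(Z^2+Z2) + Z*(P3 - A) + A*(P4 - A)) - (S1 - S2) = A'/E"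
  unfolding h using nz by (simp add: field_simps power2_eq_square)

lemma Ghk:
  fixes y :: real
  assumes "s = (h^2 - t)/2" "H' = h + 1/y" "t' = t + 1/(y*y)" "y \<noteq> 0"
  shows "s + h/y = (H'^2 - t')/2"
  unfolding assms(1-3) using assms(4) by (simp add: field_simps power2_eq_square)

lemma Gm2:
  fixes u v :: real
  assumes "(1/2)*(a^2 - t) + a/u = S" "A' = a + 1/u" "T' = t + 1/(u*u)" "u \<noteq> 0" "v = u + 1" "v \<noteq> 0"
  shows "(1/2)*(A'^2 - T') + A'/v = S + A'/v"
  unfolding assms(1)[symmetric] assms(2,3) using assms(4) by (simp add: field_simps power2_eq_square)

lemma harm_Suc': "(harm (Suc n) :: real) = harm n + 1 / real (Suc n)"
  by (simp add: harm_Suc divide_inverse)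

lemma lhs_rec:
  fixes c :: real and N k :: nat
  shows "(\<Sum>j<Suc k. 1 / ((real (Suc k) - real j) * (c + real (Suc N) - real j)))
       = 1 / (real (Suc k) * (c + real (Suc N)))
         + (\<Sum>j<k. 1 / ((real k - real j) * (c + real N - real j)))"
  by (subst sum.lessThan_Suc_shift) (simp add: algebra_simps)

lemma lhs_gen:
  fixes c :: real
  shows "(\<Sum>k=1..n. \<Sum>j<k. 1 / ((real k - real j) * (c + real n - real j)))
       = (\<Sum>k=1..n. harm k / (c + real k))"
proof (induction n)
  case 0
  then show ?case by simp
next
  case (Suc n)
  have "(\<Sum>k=1..Suc n. \<Sum>j<k. 1 / ((real k - real j) * (c + real (Suc n) - real j)))
      = (\<Sum>k=0..n. \<Sum>j<Suc k. 1 / ((real (Suc k) - real j) * (c + real (Suc n) - real j)))"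
    by (subst sum.shift_bounds_cl_Suc_ivl[symmetric]) simp
  also have "\<dots> = (\<Sum>k=0..n. 1 / (real (Suc k) * (c + real (Suc n))))
      + (\<Sum>k=0..n. \<Sum>j<k. 1 / ((real k - real j) * (c + real n - real j)))"
    by (simp only: lhs_rec sum.distrib)
  also have "(\<Sum>k=0..n. \<Sum>j<k. 1 / ((real k - real j) * (c + real n - real j)))
      = (\<Sum>k=1..n. \<Sum>j<k. 1 / ((real k - real j) * (c + real n - real j)))"
    by (simp add: sum.atLeast_Suc_atMost)
  also have "(\<Sum>k=0..n. 1 / (real (Suc k) * (c + real (Suc n)))) = harm (Suc n) / (c + real (Suc n))"
  proof -
    have "(\<Sum>k=0..n. 1 / (real (Suc k) * (c + real (Suc n))))
        = (\<Sum>k=0..n. 1 / real (Suc k)) / (c + real (Suc n))"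
      by (simp add: sum_divide_distrib)
    also have "(\<Sum>k=0..n. 1 / real (Suc k)) = harm (Suc n)"
      unfolding harm_def
      by (subst sum.shift_bounds_cl_Suc_ivl[symmetric]) (simp add: field_simps)
    finally show ?thesis .
  qed
  finally show ?case using Suc by simp
qed

lemma sum_hk: "(\<Sum>k=1..q. harm (k-1) / real k) = ((harm q)^2 - harm2 q) / 2"
proof (induction q)
  case 0
  then show ?case by (simp add: harm2_def harm_expand)
next
  case (Suc q)
  have "(\<Sum>k=1..Suc q. harm (k-1) / real k) = (\<Sum>k=1..q. harm (k-1) / real k) + harm q / real (Suc q)"
    by simp
  also have "\<dots> = ((harm (Suc q))^2 - harm2 (Suc q)) / 2"
    by (rule Ghk[OF Suc.IH harm_Suc' harm2_Suc]) simp
  finally show ?case .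
qed

definition Cl :: "nat \<Rightarrow> nat \<Rightarrow> real" where
  "Cl n q = (1/2) * ((harm n)^2 - harm2 n) - (1/2) * ((harm q)^2 + harm2 q)
     + harm q * (harm (q+n) - harm n) + harm n * (harm (Suc (q+n)) - harm n)"

definition Sg :: "nat \<Rightarrow> nat \<Rightarrow> real" where
  "Sg n q = (\<Sum>k=1..q. harm (k-1) / (real n + real k))"

lemma stepq: "Cl (Suc n) q - Cl n q - (Sg (Suc n) q - Sg n q) = harm (Suc n) / (real n + real q + 2)"
proof (induction q)
  case 0
  show ?case unfolding Cl_def
    by (rule G0[where u="real (Suc n)" and v="real (Suc (Suc n))"])
      (simp_all add: Sg_def harm_Suc' harm2_Suc harm_expand)
next
  case (Suc q)
  have e: "Sg m (Suc q) = Sg m q + harm q / (real m + real (Suc q))" for m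
    by (simp add: Sg_def)
  show ?case unfolding e Cl_def
    apply (rule G[where u="real (Suc n)" and w="real (Suc q)" and ea="real (Suc (q+n))" and eb="real (Suc (Suc (q+n)))" and ec="real (Suc (Suc (Suc (q+n))))"])
    apply (rule Suc.IH[unfolded Cl_def])
    subgoal by simp
    subgoal by simp
    subgoal by simp
    subgoal by simp
    subgoal by simp
    subgoal by simp
    subgoal by simp
    subgoal by simp
    subgoal by (simp add: harm_Suc')
    subgoal by (simp add: harm2_Suc)
    subgoal by (simp add: harm_Suc')
    subgoal by (simp add: harm2_Suc)
    subgoal by (simp add: harm_Suc')
    subgoal by (simp add: harm_Suc')
    subgoal by (simp add: harm_Suc')
    subgoal by (simp add: harm_Suc')
    subgoal by (simp add: harm_Suc')
    subgoal by (simp add: harm_Suc')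
    subgoal by (simp add: harm_Suc')
    subgoal by simp
    subgoal by simp
    subgoal by simp
    subgoal by simp
    done
qed

lemma main1: "Cl n q - Sg n q = (\<Sum>k=1..n. harm k / (real (Suc q) + real k))"
proof (induction n)
  case 0
  have "Sg 0 q = ((harm q)^2 - harm2 q) / 2" using sum_hk[of q] by (simp add: Sg_def)
  then show ?case by (simp add: Cl_def harm_expand harm2_def power2_eq_square algebra_simps)
next
  case (Suc n)
  have "Cl (Suc n) q - Sg (Suc n) q = (Cl n q - Sg n q) + harm (Suc n) / (real n + real q + 2)"
    using stepq[of n q] by simp
  then show ?case using Suc by (simp add: algebra_simps)
qed

lemma main2: "(1/2) * ((harm n :: real)^2 - harm2 n) + (harm n :: real) / (real n + 1)
   = (\<Sum>k=1..n. harm k / (1 + real k))"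
proof (induction n)
  case 0
  then show ?case by (simp add: harm_expand harm2_def)
next
  case (Suc n)
  have "(\<Sum>k=1..Suc n. harm k / (1 + real k)) = (\<Sum>k=1..n. harm k / (1 + real k)) + harm (Suc n) / (real (Suc n) + 1)"
    by simp
  moreover have "(1/2) * ((harm (Suc n) :: real)^2 - harm2 (Suc n)) + (harm (Suc n) :: real) / (real (Suc n) + 1)
      = (\<Sum>k=1..n. harm k / (1 + real k)) + harm (Suc n) / (real (Suc n) + 1)"
    by (rule Gm2[OF Suc.IH]) (simp_all add: harm_Suc' harm2_Suc algebra_simps)
  ultimately show ?case by simp
qed

lemma ivl_eq: "k \<in> {1..n} \<Longrightarrow> {0..k-1} = {..<(k::nat)}" by auto

theorem proposition11:
  fixes n p :: nat
  assumes "p \<ge> 1"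
  shows "((\<Sum>k=1..n. \<Sum>j=0..k-1. 1 / ((real k - real j) * (real n - real j + real p)))
         = (1/2) * ((harm n :: real)^2 - harm2 n)
           - (1/2) * ((harm (p-1) :: real)^2 + harm2 (p-1))
           + (harm (p-1) :: real) * (harm (p+n-1) - harm n)
           + (harm n :: real) * (harm (p+n) - harm n)
           - (\<Sum>k=1..p-1. (harm (k-1) :: real) / (real n + real k)))
       \<and> ((\<Sum>k=1..n. \<Sum>j=0..k-1. 1 / ((real k - real j) * (real n + 1 - real j)))
         = (1/2) * ((harm n :: real)^2 - harm2 n) + (harm n :: real) / (real n + 1))"
proof
  obtain q where p: "p = Suc q" using assms by (cases p) auto
  have "(\<Sum>k=1..n. \<Sum>j=0..k-1. 1 / ((real k - real j) * (real n - real j + real p)))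
      = (\<Sum>k=1..n. \<Sum>j<k. 1 / ((real k - real j) * (real p + real n - real j)))"
    by (intro sum.cong refl, subst ivl_eq) (auto simp: algebra_simps)
  also have "\<dots> = (\<Sum>k=1..n. harm k / (real p + real k))" by (rule lhs_gen)
  also have "\<dots> = Cl n q - Sg n q" using main1[of n q] p by simp
  finally show "(\<Sum>k=1..n. \<Sum>j=0..k-1. 1 / ((real k - real j) * (real n - real j + real p)))
         = (1/2) * ((harm n :: real)^2 - harm2 n)
           - (1/2) * ((harm (p-1) :: real)^2 + harm2 (p-1))
           + (harm (p-1) :: real) * (harm (p+n-1) - harm n)
           + (harm n :: real) * (harm (p+n) - harm n)
           - (\<Sum>k=1..p-1. (harm (k-1) :: real) / (real n + real k))"
    by (simp add: Cl_def Sg_def p)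
next
  have "(\<Sum>k=1..n. \<Sum>j=0..k-1. 1 / ((real k - real j) * (real n + 1 - real j)))
      = (\<Sum>k=1..n. \<Sum>j<k. 1 / ((real k - real j) * (1 + real n - real j)))"
    by (intro sum.cong refl, subst ivl_eq) (auto simp: algebra_simps)
  also have "\<dots> = (\<Sum>k=1..n. harm k / (1 + real k))" by (rule lhs_gen)
  finally show "(\<Sum>k=1..n. \<Sum>j=0..k-1. 1 / ((real k - real j) * (real n + 1 - real j)))
         = (1/2) * ((harm n :: real)^2 - harm2 n) + (harm n :: real) / (real n + 1)"
    using main2 by simp
qed

end
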